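(* The sequence $\{k^2+k+1\}_{k=0}^{\infty}$ is a Legendre multiplier sequence.
   Context: The Legendre polynomials $\mathfrak{Le}_n(x)$ are defined by $\frac{1}{\sqrt{1-2xt+t^2}}=\sum_{k=0}^{\infty}\mathfrak{Le}_k(x)t^k$. A real sequence $\{\gamma_k\}_{k=0}^{\infty}$ is a Legendre multiplier sequence if, for every $n$ and all real $a_0,\dots,a_n$, the polynomial $\sum_{k=0}^n a_k\gamma_k\mathfrak{Le}_k(x)$ has only real zeros whenever $\sum_{k=0}^n a_k\mathfrak{Le}_k(x)$ has only real zeros. *)

theory Defs
  imports "HOL-Analysis.Analysis"
begin

text \<open>Legendre polynomials via their generating function
  1/sqrt(1 - 2 x t + t^2) = sum_k Le_k(x) t^k: Le_k(z) is the k-th Taylor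
  coefficient at t = 0 (principal square root, equal to 1 at t = 0).
  They are evaluated at complex arguments so that we can speak about all
  (complex) zeros of the polynomial combinations.\<close>

definition legendre :: "nat \<Rightarrow> complex \<Rightarrow> complex" where
  "legendre k z = (deriv ^^ k) (\<lambda>t. 1 / csqrt (1 - 2 * z * t + t ^ 2)) 0 / fact k"

definition only_real_zeros :: "(complex \<Rightarrow> complex) \<Rightarrow> bool" where
  "only_real_zeros p \<longleftrightarrow> (\<forall>z. p z = 0 \<longrightarrow> z \<in> \<real>)"

definition legendre_multiplier_seq :: "(nat \<Rightarrow> real) \<Rightarrow> bool" where
  "legendre_multiplier_seq \<gamma> \<longleftrightarrow>
     (\<forall>(n::nat) (a::nat \<Rightarrow> real).
        only_real_zeros (\<lambda>z. \<Sum>k\<le>n. complex_of_real (a k) * legendre k z) \<longrightarrow>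
        only_real_zeros (\<lambda>z. \<Sum>k\<le>n. complex_of_real (a k * \<gamma> k) * legendre k z))"

end

theory Submission
  imports Defs "HOL-Complex_Analysis.Complex_Analysis" "HOL-Computational_Algebra.Fundamental_Theorem_Algebra"
begin


fun Leg :: "nat \<Rightarrow> complex poly" where
  "Leg 0 = 1"
| "Leg (Suc 0) = [:0,1:]"
| "Leg (Suc (Suc n)) = smult (1/(of_nat n+2)) (smult (2* of_nat n+3) ([:0,1:] * Leg (Suc n)) - smult (of_nat n+1) (Leg n))"

lemma Leg_rec: "(of_nat n + 2) * Leg (Suc (Suc n)) = (2* of_nat n+3) * [:0,1:] * Leg (Suc n) - (of_nat n + 1) * Leg n"
proof -
  have "(of_nat n + 2 :: complex poly) = [:of_nat n + 2:]" by (simp add: of_nat_poly one_pCons numeral_poly)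
  moreover have "(2* of_nat n+3 :: complex poly) = [:2* of_nat n + 3:]" by (simp add: of_nat_poly one_pCons numeral_poly)
  moreover have "(of_nat n + 1 :: complex poly) = [:of_nat n + 1:]" by (simp add: of_nat_poly one_pCons numeral_poly)
  moreover have "(of_nat n + 2 :: complex) \<noteq> 0"
    by (metis add_is_0 of_nat_Suc of_nat_eq_0_iff of_nat_numeral of_nat_add zero_neq_numeral)
  ultimately show ?thesis
    by (simp add: smult_diff_right mult.assoc)
qed

lemma pderiv_ofnat_mult: "pderiv ((of_nat n :: complex poly) * p) = of_nat n * pderiv p"
  by (simp add: pderiv_mult pderiv_of_nat)

lemma Leg_DE: "[:0,1:] * pderiv (Leg (Suc n)) - pderiv (Leg n) = (of_nat n + 1) * Leg (Suc n)
   \<and> [:-1,0,1:] * pderiv (Leg (Suc n)) = (of_nat n + 1) * [:0,1:] * Leg (Suc n) - (of_nat n + 1) * Leg n"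
proof (induction n)
  case 0
  then show ?case by (simp add: pderiv_pCons one_pCons)
next
  case (Suc n)
  define X :: "complex poly" where "X = [:0,1:]"
  define N :: "complex poly" where "N = of_nat n"
  define A where "A = Leg n"
  define B where "B = Leg (Suc n)"
  define C where "C = Leg (Suc (Suc n))"
  have pX: "pderiv X = 1" by (simp add: X_def pderiv_pCons)
  have sq: "[:-1,0,1:] = X*X - 1" by (simp add: X_def one_pCons)
  have D1: "X * pderiv B - pderiv A = (N+1) * B" and E1: "(X*X-1) * pderiv B = (N+1)*X*B - (N+1)*A"
    using Suc unfolding X_def N_def A_def B_def sq[unfolded X_def] by auto
  have R: "(N+2) * C = (2*N+3)*X*B - (N+1)*A" using Leg_rec[of n] unfolding X_def N_def A_def B_def C_def .
  have "pderiv ((N+2) * C) = pderiv ((2*N+3)*X*B - (N+1)*A)" using R by simp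
  hence R': "(N+2) * pderiv C = (2*N+3)*B + (2*N+3)*X*pderiv B - (N+1)*pderiv A"
    by (simp add: pderiv_mult pderiv_add pderiv_diff N_def pderiv_of_nat pX algebra_simps)
  have "(N+2) * pderiv C = (N+2) * (X * pderiv B + (N+2) * B)"
    using R' D1 by algebra
  moreover have "N + 2 \<noteq> 0" unfolding N_def
    by (metis of_nat_add of_nat_eq_0_iff of_nat_numeral add_is_0 zero_neq_numeral)
  ultimately have Cd: "pderiv C = X * pderiv B + (N+2) * B" by simp
  have D2: "X * pderiv C - pderiv B = (N+2) * C"
    using Cd E1 R by algebra
  have E2: "(X*X-1) * pderiv C = (N+2)*X*C - (N+2)*B"
    using Cd E1 R by algebra
  show ?case using D2 E2 unfolding X_def N_def B_def C_def sq[unfolded X_def]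
    by (simp add: algebra_simps)
qed

lemma Leg_ode: "pderiv ([:-1,0,1:] * pderiv (Leg n)) = of_nat n * (of_nat n + 1) * Leg n"
proof (cases n)
  case 0 then show ?thesis by simp
next
  case (Suc m)
  define X :: "complex poly" where "X = [:0,1:]"
  define N :: "complex poly" where "N = of_nat m"
  have pX: "pderiv X = 1" by (simp add: X_def pderiv_pCons)
  have sq: "[:-1,0,1:] = X*X - 1" by (simp add: X_def one_pCons)
  have D1: "X * pderiv (Leg (Suc m)) - pderiv (Leg m) = (N+1) * Leg (Suc m)"
   and E1: "(X*X-1) * pderiv (Leg (Suc m)) = (N+1)*X*Leg (Suc m) - (N+1)*Leg m"
    using Leg_DE[of m] unfolding X_def N_def sq[unfolded X_def] by auto
  have "pderiv ((X*X-1) * pderiv (Leg (Suc m))) = pderiv ((N+1)*X*Leg (Suc m) - (N+1)*Leg m)"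
    using E1 by simp
  also have "\<dots> = (N+1) * Leg (Suc m) + (N+1)*X*pderiv (Leg (Suc m)) - (N+1) * pderiv (Leg m)"
    by (simp add: pderiv_mult pderiv_add pderiv_diff N_def pderiv_of_nat pX algebra_simps)
  also have "\<dots> = (N+1)*(N+2) * Leg (Suc m)" using D1 by algebra
  finally show ?thesis unfolding Suc sq N_def by (simp add: algebra_simps)
qed



lemma Im_inverse_pos: "Im w < 0 \<Longrightarrow> Im (1 / w) > 0"
proof -
  assume w: "Im w < 0"
  have "(Re w)^2 + (Im w)^2 > 0" using w by (simp add: sum_power2_gt_zero_iff)
  then show ?thesis using w by (simp add: Im_divide divide_neg_pos)
qed

lemma Im_inverse_neg: "Im w > 0 \<Longrightarrow> Im (1 / w) < 0"
proof -
  assume w: "Im w > 0"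
  have "(Re w)^2 + (Im w)^2 > 0" using w by (simp add: sum_power2_gt_zero_iff)
  then show ?thesis using w by (simp add: Im_divide divide_neg_pos)
qed

definition nr :: "complex \<Rightarrow> complex \<Rightarrow> complex \<Rightarrow> bool" where
  "nr a b c \<longleftrightarrow> (\<forall>t. Im t \<le> 0 \<longrightarrow> a + b*t + c*t^2 \<noteq> 0)"

lemma quad_logderiv:
  assumes N: "nr a b c" and t0: "Im t0 \<le> 0"
  shows "Im ((b + 2*c*t0) / (a + b*t0 + c*t0^2)) \<ge> 0"
proof (cases "c = 0")
  case True
  show ?thesis
  proof (cases "b = 0")
    case True with \<open>c = 0\<close> show ?thesis by simp
  next
    case False
    define \<zeta> where "\<zeta> = -a/b"
    have "a + b*\<zeta> + c*\<zeta>^2 = 0" using False \<open>c=0\<close> by (simp add: \<zeta>_def)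
    hence "Im \<zeta> > 0" using N unfolding nr_def by force
    have eq: "(b + 2*c*t0) / (a + b*t0 + c*t0^2) = 1 / (t0 - \<zeta>)"
      using False \<open>c=0\<close> by (simp add: \<zeta>_def field_simps)
    have "Im (t0 - \<zeta>) < 0" using \<open>Im \<zeta> > 0\<close> t0 by simp
    then show ?thesis unfolding eq using Im_inverse_pos by fastforce
  qed
next
  case False
  define s where "s = csqrt (b^2 - 4*a*c)"
  have s2: "s^2 = b^2 - 4*a*c" unfolding s_def by simp
  define z1 where "z1 = (-b + s)/(2*c)"
  define z2 where "z2 = -b/c - z1"
  have r1: "a + b*z1 + c*z1^2 = 0"
  proof -
    have "4*c*(a + b*z1 + c*z1^2) = 4*a*c - b^2 + s^2"
      using False unfolding z1_def by (simp add: field_simps power2_eq_square)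
    then show ?thesis using s2 False by simp
  qed
  have hb: "b = -c*(z1+z2)" unfolding z2_def using False by (simp add: field_simps)
  have fac: "\<And>t. a + b*t + c*t^2 = c*(t - z1)*(t - z2)"
    using r1 hb by algebra
  have r2: "a + b*z2 + c*z2^2 = 0" using fac[of z2] by simp
  have i1: "Im z1 > 0" using r1 N unfolding nr_def by force
  have i2: "Im z2 > 0" using r2 N unfolding nr_def by force
  have ne1: "t0 - z1 \<noteq> 0" and ne2: "t0 - z2 \<noteq> 0" using i1 i2 t0 by auto
  have eq: "(b + 2*c*t0) / (a + b*t0 + c*t0^2) = 1/(t0 - z1) + 1/(t0 - z2)"
  proof -
    have num: "b + 2*c*t0 = c*((t0-z1)+(t0-z2))" using hb by algebra
    have gen: "\<And>u1 u2. u1 \<noteq> 0 \<Longrightarrow> u2 \<noteq> 0 \<Longrightarrow> c*(u1+u2)/(c*u1*u2) = 1/u1 + 1/u2"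
      using False by (simp add: field_simps)
    show ?thesis unfolding fac num using gen[OF ne1 ne2] .
  qed
  have "Im (1/(t0 - z1)) > 0" "Im (1/(t0 - z2)) > 0"
    using i1 i2 t0 by (auto intro!: Im_inverse_pos)
  then show ?thesis unfolding eq by simp
qed

lemma nr_step:
  assumes N: "nr a b c" and w: "Im w < 0"
  shows "nr (a + w*b) (b + 2*w*c) c"
  unfolding nr_def
proof (intro allI impI notI)
  fix t assume t: "Im t \<le> 0" and eq: "a + w*b + (b + 2*w*c)*t + c*t^2 = 0"
  have Q0: "a + b*t + c*t^2 \<noteq> 0" using N t unfolding nr_def by blast
  have w0: "w \<noteq> 0" using w by auto
  define Q0 where "Q0 = a + b*t + c*t^2"
  define Q1 where "Q1 = b + 2*c*t"
  have "Q0 + w*Q1 = 0" using eq unfolding Q0_def Q1_def by algebra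
  hence "Q1 = - Q0 / w" using w0 by (simp add: field_simps add_eq_0_iff2)
  hence "Q1 / Q0 = - 1/w" using Q0 w0 unfolding Q0_def by (simp add: field_simps)
  hence "(b + 2*c*t) / (a + b*t + c*t^2) = - 1/w" unfolding Q0_def Q1_def .
  moreover have "Im (-1/w) < 0" using Im_inverse_pos[OF w] by simp
  ultimately show False using quad_logderiv[OF N t] by simp
qed

definition Bv :: "complex \<Rightarrow> complex poly \<Rightarrow> complex \<Rightarrow> complex \<Rightarrow> complex \<Rightarrow> complex" where
  "Bv z p a b c = a * poly p z + b * poly (pderiv p) z + c * poly (pderiv (pderiv p)) z"

lemma Bv_step:
  assumes "z \<noteq> r"
  shows "Bv z ([:-r,1:] * s) a b c = (z - r) * Bv z s (a + (1/(z-r))*b) (b + 2*(1/(z-r))*c) c"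
proof -
  have pl: "pderiv [:-r,1:] = 1" by (simp add: pderiv_pCons)
  have d1: "pderiv ([:-r,1:] * s) = s + [:-r,1:] * pderiv s"
    by (simp only: pderiv_mult pl mult_1_left mult_1_right add.commute)
  have d2: "pderiv (pderiv ([:-r,1:] * s)) = 2 * pderiv s + [:-r,1:] * pderiv (pderiv s)"
    unfolding d1 pderiv_add pderiv_mult pl by simp
  have e0: "poly ([:-r,1:] * s) z = (z-r)*poly s z" by (simp add: algebra_simps)
  have e1: "poly (pderiv ([:-r,1:] * s)) z = poly s z + (z-r)*poly (pderiv s) z"
    unfolding d1 by (simp add: algebra_simps)
  have e2: "poly (pderiv (pderiv ([:-r,1:] * s))) z = 2*poly (pderiv s) z + (z-r)*poly (pderiv (pderiv s)) z"
    unfolding d2 by (simp add: algebra_simps)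
  have du: "(z-r)*(1/(z-r)) = 1" using assms by simp
  show ?thesis unfolding Bv_def e2 e1 e0 using du by algebra
qed

lemma core:
  fixes p :: "complex poly"
  assumes "p \<noteq> 0" "\<forall>x. poly p x = 0 \<longrightarrow> Im x = 0" "Im z > 0" "nr a b c"
  shows "Bv z p a b c \<noteq> 0"
  using assms
proof (induction "degree p" arbitrary: p a b c rule: less_induct)
  case less
  show ?case
  proof (cases "degree p = 0")
    case True
    then obtain k where p: "p = [:k:]" by (metis degree_eq_zeroE)
    have "k \<noteq> 0" using less.prems p by auto
    moreover have "a \<noteq> 0" using less.prems(4) unfolding nr_def by (metis add_0 mult_zero_right zero_complex.simps(2) zero_power2 order_refl)
    ultimately show ?thesis by (simp add: p Bv_def)
  next
    case False
    then have "\<not> constant (poly p)" by (simp add: constant_degree)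
    then obtain r where r: "poly p r = 0" using fundamental_theorem_of_algebra by blast
    then have Ir: "Im r = 0" using less.prems by auto
    from r obtain s where ps: "p = [:-r,1:] * s" by (metis dvdE poly_eq_0_iff_dvd)
    have s0: "s \<noteq> 0" using less.prems ps by auto
    have "degree ([:-r,1:] * s) = degree [:-r,1:] + degree s" by (rule degree_mult_eq) (use s0 in auto)
    hence ds: "degree s < degree p" using ps by simp
    have sr: "\<forall>x. poly s x = 0 \<longrightarrow> Im x = 0" using less.prems ps by auto
    have zr: "z \<noteq> r" using Ir less.prems by auto
    have w: "Im (1/(z-r)) < 0" using Ir less.prems by (intro Im_inverse_neg) simp
    have "Bv z s (a + (1/(z-r))*b) (b + 2*(1/(z-r))*c) c \<noteq> 0"
      using less.hyps[OF ds s0 sr less.prems(3) nr_step[OF less.prems(4) w]] by (simp add: mult.assoc)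
    then show ?thesis unfolding ps Bv_step[OF zr] using zr by simp
  qed
qed



lemma hd_tmult:
  fixes f :: "complex \<Rightarrow> complex"
  assumes "f holomorphic_on S" "open S" "x \<in> S"
  shows "(deriv^^n) (\<lambda>t. t * f t) x = x * (deriv^^n) f x + of_nat n * (deriv^^(n-1)) f x"
proof -
  have h: "(\<lambda>t. t) holomorphic_on S" by simp
  have "(deriv^^n) (\<lambda>t. t * f t) x = (\<Sum>i = 0..n. of_nat (n choose i) * (deriv ^^ i) (\<lambda>t. t) x * (deriv ^^ (n-i)) f x)"
    by (rule higher_deriv_mult[OF h assms])
  also have "\<dots> = (\<Sum>i = 0..n. (if i = 0 then x * (deriv^^n) f x else 0) + (if i = 1 then of_nat n * (deriv^^(n-1)) f x else 0))"
    by (intro sum.cong refl) auto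
  also have "\<dots> = x * (deriv^^n) f x + of_nat n * (deriv^^(n-1)) f x"
    by (cases n) (auto simp: sum.distrib)
  finally show ?thesis .
qed

lemma gen_facts:
  fixes z :: complex
  defines "G \<equiv> (\<lambda>t. 1 / csqrt (1 - 2 * z * t + t ^ 2))"
  shows "(deriv^^0) G 0 = 1" "(deriv^^1) G 0 = z"
    "(deriv^^(Suc (Suc n))) G 0 = (2* of_nat n+3) * z * (deriv^^(Suc n)) G 0 - (of_nat n+1)^2 * (deriv^^n) G 0"
proof -
  define u where "u = (\<lambda>t::complex. 1 - 2 * z * t + t ^ 2)"
  define S where "S = {t. 0 < Re (u t)}"
  have oS: "open S" unfolding S_def u_def
    by (intro open_Collect_less continuous_intros)
  have S0: "0 \<in> S" unfolding S_def u_def by simp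
  have nonpos: "u t \<notin> \<real>\<^sub>\<le>\<^sub>0" if "t \<in> S" for t
    using that unfolding S_def by (auto simp: complex_nonpos_Reals_iff)
  have u0: "u t \<noteq> 0" if "t \<in> S" for t using that unfolding S_def by auto
  have cs0: "csqrt (u t) \<noteq> 0" if "t \<in> S" for t using u0[OF that] by simp
  have Gu: "G t = 1 / csqrt (u t)" for t unfolding G_def u_def by simp
  have der: "(G has_field_derivative ((z - t) * G t / u t)) (at t)" if t: "t \<in> S" for t
  proof -
    have "((\<lambda>t. 1 / csqrt (u t)) has_field_derivative
          - ((- (2*z) + 2*t) / (2 * csqrt (u t))) / (csqrt (u t))^2) (at t)"
      unfolding u_def using nonpos[OF t] cs0[OF t] unfolding u_def
      by (auto intro!: derivative_eq_intros simp: power2_eq_square field_simps)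
    moreover have "- ((- (2*z) + 2*t) / (2 * csqrt (u t))) / (csqrt (u t))^2 = (z - t) * G t / u t"
      unfolding Gu using cs0[OF t] u0[OF t] by (simp add: field_simps)
    ultimately show ?thesis unfolding Gu[abs_def] by simp
  qed
  have hG: "G holomorphic_on S" using der oS holomorphic_on_open by blast
  have dG: "deriv G t = (z - t) * G t / u t" if "t \<in> S" for t using der[OF that] DERIV_imp_deriv by blast
  have ident: "u t * deriv G t = (z - t) * G t" if "t \<in> S" for t using dG[OF that] u0[OF that] by simp
  define F where "F = deriv G"
  have hF: "F holomorphic_on S" unfolding F_def using hG oS by (rule holomorphic_deriv)
  have htF: "(\<lambda>t. t * F t) holomorphic_on S" using hF by (intro holomorphic_intros)
  have httF: "(\<lambda>t. t * (t * F t)) holomorphic_on S" using hF by (intro holomorphic_intros)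
  have htG: "(\<lambda>t. t * G t) holomorphic_on S" using hG by (intro holomorphic_intros)
  have hzG: "(\<lambda>t. z * G t) holomorphic_on S" using hG by (intro holomorphic_intros)
  have hzF: "(\<lambda>t. 2 * z * (t * F t)) holomorphic_on S" using hF by (intro holomorphic_intros)
  have hA: "(\<lambda>t. F t - 2 * z * (t * F t)) holomorphic_on S" using hF by (intro holomorphic_intros)
  have hL: "(\<lambda>t. F t - 2 * z * (t * F t) + t * (t * F t)) holomorphic_on S"
    using hF by (intro holomorphic_intros)
  have hR: "(\<lambda>t. z * G t - t * G t) holomorphic_on S" using hG by (intro holomorphic_intros)
  let ?d = "\<lambda>m f. (deriv^^m) f (0::complex)"
  have key: "?d m (\<lambda>t. F t - 2 * z * (t * F t) + t * (t * F t)) = ?d m (\<lambda>t. z * G t - t * G t)" for m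
  proof (rule higher_deriv_transform_within_open[OF hL hR oS S0])
    fix w assume "w \<in> S"
    then show "F w - 2 * z * (w * F w) + w * (w * F w) = z * G w - w * G w"
      using ident[of w] unfolding F_def u_def by (simp add: algebra_simps power2_eq_square)
  qed
  have L: "?d m (\<lambda>t. F t - 2 * z * (t * F t) + t * (t * F t)) =
      ?d m F - 2 * z * ?d m (\<lambda>t. t * F t) + ?d m (\<lambda>t. t * (t * F t))" for m
    using higher_deriv_add[OF hA httF oS S0, of m] higher_deriv_diff[OF hF hzF oS S0, of m]
      higher_deriv_cmult[OF htF S0 oS, of m "2*z"]
    by (simp add: mult.assoc)
  have R: "?d m (\<lambda>t. z * G t - t * G t) = z * ?d m G - ?d m (\<lambda>t. t * G t)" for m
    using higher_deriv_diff[OF hzG htG oS S0, of m] higher_deriv_cmult[OF hG S0 oS, of m z] by simp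
  have T1: "?d m (\<lambda>t. t * F t) = of_nat m * ?d (m-1) F" for m
    using hd_tmult[OF hF oS S0, of m] by simp
  have T2: "?d m (\<lambda>t. t * (t * F t)) = of_nat m * (of_nat (m-1) * ?d (m-2) F)" for m
    using hd_tmult[OF htF oS S0, of m] T1[of "m-1"] by (simp add: diff_diff_add numeral_2_eq_2)
  have T3: "?d m (\<lambda>t. t * G t) = of_nat m * ?d (m-1) G" for m
    using hd_tmult[OF hG oS S0, of m] by simp
  have FG: "?d m F = ?d (Suc m) G" for m unfolding F_def by (simp add: funpow_Suc_right del: funpow.simps)
  show "(deriv^^0) G 0 = 1" unfolding G_def by simp
  show "(deriv^^1) G 0 = z" using dG[OF S0] unfolding G_def u_def by simp
  have "?d (Suc n) F - 2 * z * ?d (Suc n) (\<lambda>t. t * F t) + ?d (Suc n) (\<lambda>t. t * (t * F t))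
        = z * ?d (Suc n) G - ?d (Suc n) (\<lambda>t. t * G t)"
    using key[of "Suc n"] unfolding L R .
  hence E: "?d (Suc (Suc n)) G - 2 * z * (of_nat (Suc n) * ?d (Suc n) G) + of_nat (Suc n) * (of_nat n * ?d (n-1) F)
        = z * ?d (Suc n) G - of_nat (Suc n) * ?d n G"
    unfolding T1 T2 T3 FG by simp
  have X: "of_nat n * ?d (n-1) F = of_nat n * ?d n G"
    by (cases n) (simp_all add: FG)
  from E[unfolded X] show "(deriv^^(Suc (Suc n))) G 0 = (2* of_nat n+3) * z * (deriv^^(Suc n)) G 0 - (of_nat n+1)^2 * (deriv^^n) G 0"
    by (simp add: algebra_simps power2_eq_square)
qed


lemma legendre_eq: "legendre k z = poly (Leg k) z"
proof -
  define G where "G = (\<lambda>t. 1 / csqrt (1 - 2 * z * t + t ^ 2))"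
  define P where "P = (\<lambda>k. (deriv^^k) G 0 / fact k)"
  have Pl: "legendre k z = P k" for k unfolding legendre_def P_def G_def ..
  have c: "(deriv^^k) G 0 = fact k * P k" for k unfolding P_def by simp
  have rec: "(of_nat n + 2) * P (Suc (Suc n)) = (2 * of_nat n + 3) * z * P (Suc n) - (of_nat n + 1) * P n" for n
  proof -
    have "fact (Suc (Suc n)) * P (Suc (Suc n)) = (2 * of_nat n+3) * z * (fact (Suc n) * P (Suc n)) - (of_nat n+1)^2 * (fact n * P n)"
      using gen_facts(3)[where z=z and n=n] unfolding G_def[symmetric] c .
    hence "((of_nat n + 1) * fact n) * ((of_nat n + 2) * P (Suc (Suc n))) = ((of_nat n + 1) * fact n) * ((2 * of_nat n+3) * z * P (Suc n) - (of_nat n+1) * P n)"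
      by (simp add: algebra_simps power2_eq_square)
    moreover have "(of_nat n + 1) * fact n \<noteq> (0::complex)"
      by (metis fact_nonzero mult_eq_0_iff of_nat_Suc of_nat_eq_0_iff add.commute nat.distinct(1))
    ultimately show ?thesis by (simp only: mult_cancel_left) simp
  qed
  have E: "(of_nat n + 2) * poly (Leg (Suc (Suc n))) z = (2 * of_nat n + 3) * z * poly (Leg (Suc n)) z - (of_nat n + 1) * poly (Leg n) z" for n
  proof -
    have "poly ((of_nat n + 2) * Leg (Suc (Suc n))) z = poly ((2* of_nat n+3) * [:0,1:] * Leg (Suc n) - (of_nat n + 1) * Leg n) z"
      using Leg_rec[of n] by simp
    then show ?thesis by (simp add: poly_of_nat algebra_simps del: Leg.simps)
  qed
  have "P k = poly (Leg k) z \<and> P (Suc k) = poly (Leg (Suc k)) z" for k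
  proof (induction k)
    case 0
    then show ?case using gen_facts(1,2)[of z] unfolding P_def G_def by simp
  next
    case (Suc k)
    have nz: "(of_nat k + 2 :: complex) \<noteq> 0"
      by (metis add_is_0 of_nat_Suc of_nat_eq_0_iff of_nat_numeral of_nat_add zero_neq_numeral)
    have "(of_nat k + 2) * P (Suc (Suc k)) = (of_nat k + 2) * poly (Leg (Suc (Suc k))) z"
      unfolding rec E using Suc by (simp del: Leg.simps)
    then show ?case using Suc nz by (simp del: Leg.simps)
  qed
  then show ?thesis using Pl by simp
qed

lemma nr_init:
  assumes w: "Im w > 0"
  shows "nr 1 (2*w) (w^2 - 1)"
  unfolding nr_def
proof (intro allI impI notI)
  fix t assume t: "Im t \<le> 0" and eq: "1 + 2*w*t + (w^2-1)*t^2 = 0"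
  have "(1 + (w+1)*t) * (1 + (w-1)*t) = 0" using eq by algebra
  then have "1 + (w+1)*t = 0 \<or> 1 + (w-1)*t = 0" by simp
  then show False
  proof
    assume A: "1 + (w+1)*t = 0"
    have nz: "w+1 \<noteq> 0" using w by (auto simp: complex_eq_iff)
    have "(w+1)*t = -1" using A by algebra
    hence "t = (-1)/(w+1)" using nz by (metis nonzero_mult_div_cancel_left)
    moreover have "Im (1/(w+1)) < 0" using w by (intro Im_inverse_neg) simp
    ultimately show False using t by simp
  next
    assume A: "1 + (w-1)*t = 0"
    have nz: "w-1 \<noteq> 0" using w by (auto simp: complex_eq_iff)
    have "(w-1)*t = -1" using A by algebra
    hence "t = (-1)/(w-1)" using nz by (metis nonzero_mult_div_cancel_left)
    moreover have "Im (1/(w-1)) < 0" using w by (intro Im_inverse_neg) simp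
    ultimately show False using t by simp
  qed
qed

lemma pderiv_sum': "pderiv (sum f A) = (\<Sum>x\<in>A. pderiv (f x))"
  using higher_pderiv_sum[of 1 f A] by simp

lemma map_cnj_pderiv: "map_poly cnj (pderiv p) = pderiv (map_poly cnj p)"
  by (rule poly_eqI) (simp add: coeff_map_poly coeff_pderiv)

lemma Bv_cnj: "Bv w p a b c = cnj (Bv (cnj w) (map_poly cnj p) (cnj a) (cnj b) (cnj c))"
  unfolding Bv_def by (simp add: map_cnj_pderiv[symmetric])

theorem lemma4p7:
  shows "legendre_multiplier_seq (\<lambda>k. real k ^ 2 + real k + 1)"
  unfolding legendre_multiplier_seq_def
proof (intro allI impI)
  fix n :: nat and a :: "nat \<Rightarrow> real"
  assume H: "only_real_zeros (\<lambda>z. \<Sum>k\<le>n. complex_of_real (a k) * legendre k z)"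
  define p where "p = (\<Sum>k\<le>n. smult (complex_of_real (a k)) (Leg k))"
  define q where "q = (\<Sum>k\<le>n. smult (complex_of_real (a k * (real k ^ 2 + real k + 1))) (Leg k))"
  have evp: "(\<Sum>k\<le>n. complex_of_real (a k) * legendre k z) = poly p z" for z
    unfolding p_def by (simp add: poly_sum legendre_eq)
  have evq: "(\<Sum>k\<le>n. complex_of_real (a k * (real k ^ 2 + real k + 1)) * legendre k z) = poly q z" for z
    unfolding q_def by (simp add: poly_sum legendre_eq)
  have qp: "q = p + pderiv ([:-1,0,1:] * pderiv p)"
  proof -
    have "pderiv ([:-1,0,1:] * pderiv p) = (\<Sum>k\<le>n. smult (complex_of_real (a k)) (pderiv ([:-1,0,1:] * pderiv (Leg k))))"
      unfolding p_def by (simp add: pderiv_sum' pderiv_smult sum_distrib_left)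
    also have "\<dots> = (\<Sum>k\<le>n. smult (complex_of_real (a k) * (of_nat k * (of_nat k + 1))) (Leg k))"
    proof (intro sum.cong refl)
      fix k
      have "(of_nat k * (of_nat k + 1) :: complex poly) = of_nat (k*(k+1))" by (simp add: algebra_simps)
      also have "\<dots> = [:of_nat (k*(k+1)):]" by (rule of_nat_poly)
      finally show "smult (complex_of_real (a k)) (pderiv ([:-1,0,1:] * pderiv (Leg k))) =
          smult (complex_of_real (a k) * (of_nat k * (of_nat k + 1))) (Leg k)"
        unfolding Leg_ode by (simp add: algebra_simps)
    qed
    finally show ?thesis unfolding q_def p_def
      by (simp add: sum.distrib[symmetric] smult_add_left[symmetric] algebra_simps power2_eq_square)
  qed
  have p0: "p \<noteq> 0"
  proof
    assume "p = 0"
    then have "\<i> \<in> \<real>" using H unfolding only_real_zeros_def evp by simp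
    then show False by (simp add: complex_is_Real_iff)
  qed
  have proots: "\<forall>x. poly p x = 0 \<longrightarrow> Im x = 0"
    using H unfolding only_real_zeros_def evp by (simp add: complex_is_Real_iff)
  have pl: "pderiv [:-1,0,1:] = [:0,2::complex:]" by (simp add: pderiv_pCons)
  have d: "pderiv ([:-1,0,1:] * pderiv p) = [:0,2:] * pderiv p + [:-1,0,1:] * pderiv (pderiv p)"
    by (simp only: pderiv_mult pl add.commute mult.commute)
  have Tq: "poly q w = Bv w p 1 (2*w) (w^2-1)" for w
    unfolding qp Bv_def poly_add d by (simp add: algebra_simps power2_eq_square)
  show "only_real_zeros (\<lambda>z. \<Sum>k\<le>n. complex_of_real (a k * (real k ^ 2 + real k + 1)) * legendre k z)"
    unfolding only_real_zeros_def evq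
  proof (intro allI impI)
    fix w assume qw: "poly q w = 0"
    show "w \<in> \<real>"
    proof (rule ccontr)
      assume "w \<notin> \<real>"
      then have "Im w \<noteq> 0" by (simp add: complex_is_Real_iff)
      then consider "Im w > 0" | "Im w < 0" by linarith
      then show False
      proof cases
        case 1
        show False using core[OF p0 proots 1 nr_init[OF 1]] qw Tq by simp
      next
        case 2
        define pc where "pc = map_poly cnj p"
        have "map_poly cnj pc = p" unfolding pc_def by (rule poly_eqI) (simp add: coeff_map_poly)
        then have pc0: "pc \<noteq> 0" using p0 by auto
        have pcr: "\<forall>x. poly pc x = 0 \<longrightarrow> Im x = 0"
          using proots unfolding pc_def by (auto simp: poly_map_poly_cnj)
        have i: "Im (cnj w) > 0" using 2 by simp
        have "Bv (cnj w) pc 1 (2 * cnj w) ((cnj w)^2 - 1) \<noteq> 0"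
          using core[OF pc0 pcr i nr_init[OF i]] .
        moreover have "Bv w p 1 (2*w) (w^2-1) = cnj (Bv (cnj w) pc 1 (2 * cnj w) ((cnj w)^2 - 1))"
          unfolding pc_def by (subst Bv_cnj) simp
        ultimately show False using qw Tq by simp
      qed
    qed
  qed
qed

end
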